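(* If $Q$ is a Jordan loop of order $9$, then either $Q$ has exponent $3$ (i.e. $x^3=e$ for all $x\in Q$) or $Q$ is cyclic (i.e. $Q=\langle x\rangle$ for some $x\in Q$).
   Context: A loop is a set $Q$ with a binary operation (juxtaposition) and neutral element $e$ such that for all $a,b$ the equations $ax=b$, $ya=b$ have unique solutions. A Jordan loop is a commutative loop satisfying $x^2(yx)=(x^2y)x$. $x^3$ denotes $x(xx)$. $\langle x\rangle$ denotes the subloop generated by $x$ (the smallest subloop of $Q$ containing $x$). *)

theory Defs
  imports Main
begin

definition loop :: "'a set \<Rightarrow> ('a \<Rightarrow> 'a \<Rightarrow> 'a) \<Rightarrow> 'a \<Rightarrow> bool" where
  "loop Q m e \<longleftrightarrow>
     (\<forall>a\<in>Q. \<forall>b\<in>Q. m a b \<in> Q) \<and> e \<in> Q \<and>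
     (\<forall>a\<in>Q. m e a = a \<and> m a e = a) \<and>
     (\<forall>a\<in>Q. \<forall>b\<in>Q. \<exists>!x. x \<in> Q \<and> m a x = b) \<and>
     (\<forall>a\<in>Q. \<forall>b\<in>Q. \<exists>!y. y \<in> Q \<and> m y a = b)"

definition jordan_loop :: "'a set \<Rightarrow> ('a \<Rightarrow> 'a \<Rightarrow> 'a) \<Rightarrow> 'a \<Rightarrow> bool" where
  "jordan_loop Q m e \<longleftrightarrow> loop Q m e \<and>
     (\<forall>x\<in>Q. \<forall>y\<in>Q. m x y = m y x) \<and>
     (\<forall>x\<in>Q. \<forall>y\<in>Q. m (m x x) (m y x) = m (m (m x x) y) x)"

definition subloop :: "'a set \<Rightarrow> 'a set \<Rightarrow> ('a \<Rightarrow> 'a \<Rightarrow> 'a) \<Rightarrow> 'a \<Rightarrow> bool" where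
  "subloop S Q m e \<longleftrightarrow> S \<subseteq> Q \<and> loop S m e"

definition gen_subloop :: "'a set \<Rightarrow> ('a \<Rightarrow> 'a \<Rightarrow> 'a) \<Rightarrow> 'a \<Rightarrow> 'a \<Rightarrow> 'a set" where
  "gen_subloop Q m e x = \<Inter>{S. subloop S Q m e \<and> x \<in> S}"

definition cube :: "('a \<Rightarrow> 'a \<Rightarrow> 'a) \<Rightarrow> 'a \<Rightarrow> 'a" where
  "cube m x = m x (m x x)"

end

theory Submission
  imports Defs
begin

lemma invol_fix:
  "\<forall>A. finite A \<longrightarrow> card A = n \<longrightarrow> odd n \<longrightarrow> (\<forall>a\<in>A. f a \<in> A \<and> f (f a) = a) \<longrightarrow> (\<exists>a\<in>A. f a = a)"
proof (induction n rule: less_induct)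
  case (less n)
  show ?case
  proof (intro allI impI)
    fix A :: "'a set"
    assume fA: "finite A" and cA: "card A = n" and on: "odd n" and inv: "\<forall>a\<in>A. f a \<in> A \<and> f (f a) = a"
    show "\<exists>a\<in>A. f a = a"
    proof (rule ccontr)
      assume nf: "\<not> (\<exists>a\<in>A. f a = a)"
      have "n \<noteq> 0" using on by (rule_tac notI) simp
      then have "A \<noteq> {}" using cA by (rule_tac notI) simp
      then obtain a where aA: "a \<in> A" by blast
      have faA: "f a \<in> A" using inv aA by blast
      have ne: "f a \<noteq> a" using nf aA by blast
      have ffa: "f (f a) = a" using inv aA by blast
      define B where "B = A - {a, f a}"
      have sub: "{a, f a} \<subseteq> A" using aA faA by blast
      have c2: "card {a, f a} = 2" using ne by simp
      have cB: "card B = n - 2" unfolding B_def using card_Diff_subset[OF _ sub] cA c2 by simp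
      have "card {a, f a} \<le> n" using card_mono[OF fA sub] cA by simp
      then have n2: "n \<ge> 2" using c2 by simp
      have invB: "\<forall>b\<in>B. f b \<in> B \<and> f (f b) = b"
      proof
        fix b assume bB: "b \<in> B"
        then have bA: "b \<in> A" and ba: "b \<noteq> a" and bfa: "b \<noteq> f a" unfolding B_def by auto
        have fbA: "f b \<in> A" and ffb: "f (f b) = b" using inv bA by auto
        have "f b \<noteq> a" using ffb bfa by (rule_tac notI) simp
        moreover have "f b \<noteq> f a" using ffb ffa ba by (rule_tac notI) simp
        ultimately show "f b \<in> B \<and> f (f b) = b" unfolding B_def using fbA ffb by simp
      qed
      have lt: "n - 2 < n" using n2 by simp
      have oB: "odd (n - 2)" using on n2 by simp
      have fB: "finite B" unfolding B_def using fA by simp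
      have "\<exists>b\<in>B. f b = b" using less.IH[OF lt] fB cB oB invB by blast
      then show False using nf unfolding B_def by blast
    qed
  qed
qed

locale JL =
  fixes Q :: "'a set" and m :: "'a \<Rightarrow> 'a \<Rightarrow> 'a" and e :: 'a
  assumes J: "jordan_loop Q m e" and fin: "finite Q" and card9: "card Q = 9"
begin

lemma L: "loop Q m e" using J unfolding jordan_loop_def by (rule conjunct1)
lemma LL: "(\<forall>a\<in>Q. \<forall>b\<in>Q. m a b \<in> Q) \<and> e \<in> Q \<and>
     (\<forall>a\<in>Q. m e a = a \<and> m a e = a) \<and>
     (\<forall>a\<in>Q. \<forall>b\<in>Q. \<exists>!x. x \<in> Q \<and> m a x = b) \<and>
     (\<forall>a\<in>Q. \<forall>b\<in>Q. \<exists>!y. y \<in> Q \<and> m y a = b)" using L unfolding loop_def .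
lemma closed: "a\<in>Q \<Longrightarrow> b\<in>Q \<Longrightarrow> m a b \<in> Q" using LL[THEN conjunct1] by blast
lemma e_in: "e \<in> Q" using LL[THEN conjunct2, THEN conjunct1] .
lemma lid: "a \<in> Q \<Longrightarrow> m e a = a" using LL[THEN conjunct2, THEN conjunct2, THEN conjunct1] by blast
lemma rid: "a \<in> Q \<Longrightarrow> m a e = a" using LL[THEN conjunct2, THEN conjunct2, THEN conjunct1] by blast
lemma JJ: "(\<forall>x\<in>Q. \<forall>y\<in>Q. m x y = m y x) \<and>
     (\<forall>x\<in>Q. \<forall>y\<in>Q. m (m x x) (m y x) = m (m (m x x) y) x)" using J unfolding jordan_loop_def by (rule conjunct2)
lemma comm: "a\<in>Q \<Longrightarrow> b\<in>Q \<Longrightarrow> m a b = m b a" using JJ[THEN conjunct1] by blast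
lemma jordan: "x\<in>Q \<Longrightarrow> y\<in>Q \<Longrightarrow> m (m x x) (m y x) = m (m (m x x) y) x"
  using JJ[THEN conjunct2] by blast
lemma uniq: "a\<in>Q \<Longrightarrow> b\<in>Q \<Longrightarrow> \<exists>!x. x \<in> Q \<and> m a x = b"
  using LL[THEN conjunct2, THEN conjunct2, THEN conjunct2, THEN conjunct1] by blast
lemma lcancel: "a\<in>Q \<Longrightarrow> y\<in>Q \<Longrightarrow> z\<in>Q \<Longrightarrow> m a y = m a z \<Longrightarrow> y = z"
proof -
  assume a: "a\<in>Q" and y: "y\<in>Q" and z: "z\<in>Q" and eq: "m a y = m a z"
  have "\<exists>!x. x \<in> Q \<and> m a x = m a y" using uniq[OF a closed[OF a y]] .
  then show "y = z" using y z eq by (metis (no_types, lifting))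
qed
lemma rcancel: "a\<in>Q \<Longrightarrow> y\<in>Q \<Longrightarrow> z\<in>Q \<Longrightarrow> m y a = m z a \<Longrightarrow> y = z"
  using lcancel comm by metis

definition P :: "'a \<Rightarrow> nat \<Rightarrow> 'a" where "P x n = (m x ^^ n) e"

lemma P0[simp]: "P x 0 = e" by (simp add: P_def)
lemma PSuc: "P x (Suc n) = m x (P x n)" by (simp add: P_def)
lemma P_in: "x\<in>Q \<Longrightarrow> P x n \<in> Q"
  by (induction n) (auto simp: PSuc closed e_in)
lemma P_add: "P x (a + b) = (m x ^^ a) (P x b)" by (simp add: P_def funpow_add)
lemma P1: "x\<in>Q \<Longrightarrow> P x 1 = x" by (simp add: P_def rid)
lemma P2: "x\<in>Q \<Longrightarrow> P x 2 = m x x" by (simp add: P_def rid numeral_2_eq_2)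
lemma P3: "x\<in>Q \<Longrightarrow> P x 3 = cube m x" by (simp add: P_def rid numeral_3_eq_3 cube_def)

lemma P_cancel: "x\<in>Q \<Longrightarrow> P x (i + a) = P x (i + b) \<Longrightarrow> P x a = P x b"
proof (induction i)
  case 0 then show ?case by simp
next
  case (Suc i)
  have "m x (P x (i + a)) = m x (P x (i + b))" using Suc.prems by (simp add: PSuc)
  then have "P x (i + a) = P x (i + b)" using lcancel Suc.prems P_in by blast
  then show ?case using Suc by blast
qed

lemma P_ret: assumes x: "x\<in>Q" shows "\<exists>n. 0<n \<and> P x n = e"
proof -
  have "\<not> inj_on (P x) {0..9::nat}"
  proof
    assume "inj_on (P x) {0..9::nat}"
    then have "card (P x ` {0..9::nat}) = 10" by (simp add: card_image)
    moreover have "card (P x ` {0..9::nat}) \<le> card Q"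
      by (rule card_mono[OF fin]) (auto simp: P_in x)
    ultimately show False using card9 by simp
  qed
  then obtain i j where ij: "i \<noteq> j" "P x i = P x j" unfolding inj_on_def by blast
  have "\<exists>i j. i < j \<and> P x i = P x j" using ij by (metis linorder_neqE_nat)
  then obtain i j where "i < j" "P x i = P x j" by blast
  then have "P x (i + (j - i)) = P x (i + 0)" by simp
  then have "P x (j - i) = e" using P_cancel x by (metis P0)
  then show ?thesis using \<open>i < j\<close> by (intro exI[of _ "j - i"]) simp
qed

definition k :: "'a \<Rightarrow> nat" where "k x = (LEAST n. 0 < n \<and> P x n = e)"

lemma k: "x\<in>Q \<Longrightarrow> 0 < k x \<and> P x (k x) = e"
  unfolding k_def using P_ret by (rule LeastI_ex)
lemma k_min: "0<n \<Longrightarrow> n < k x \<Longrightarrow> P x n \<noteq> e"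
  unfolding k_def using not_less_Least by blast

lemma P_addk: "x\<in>Q \<Longrightarrow> P x (a + k x) = P x a"
  using k[of x] P_add[of x a "k x"] by (simp add: P_def)
lemma P_period: "x\<in>Q \<Longrightarrow> P x (a + k x * c) = P x a"
proof (induction c)
  case 0 then show ?case by simp
next
  case (Suc c)
  have "a + k x * Suc c = (a + k x * c) + k x" by simp
  then show ?case using Suc P_addk by metis
qed
lemma P_mod: "x\<in>Q \<Longrightarrow> P x n = P x (n mod k x)"
proof -
  assume x: "x\<in>Q"
  have "n mod k x + k x * (n div k x) = n" by (rule mod_mult_div_eq)
  then show ?thesis using P_period[OF x, of "n mod k x" "n div k x"] by simp
qed
lemma P_e_iff: assumes x: "x\<in>Q" shows "P x n = e \<longleftrightarrow> k x dvd n"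
proof
  assume "P x n = e"
  then have "P x (n mod k x) = e" using P_mod[OF x, of n] by simp
  moreover have "n mod k x < k x" using k x by simp
  ultimately have "n mod k x = 0" using k_min by (metis neq0_conv)
  then show "k x dvd n" by auto
next
  assume "k x dvd n"
  then obtain c where "n = k x * c" by auto
  then show "P x n = e" using P_period[of x 0 c] x by simp
qed

lemma P_inj: assumes x: "x\<in>Q" shows "inj_on (P x) {..<k x}"
proof
  fix i j assume i: "i \<in> {..<k x}" and j: "j \<in> {..<k x}" and eq: "P x i = P x j"
  show "i = j"
  proof (rule ccontr)
    assume "i \<noteq> j"
    then have "\<exists>i j. i < j \<and> j < k x \<and> P x i = P x j" using i j eq
      by (metis lessThan_iff linorder_neqE_nat)
    then obtain i j where ij: "i < j" "j < k x" "P x i = P x j" by blast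
    then have "P x (i + (j - i)) = P x (i + 0)" by simp
    then have "P x (j - i) = e" using P_cancel x by (metis P0)
    then show False using k_min[of "j - i" x] ij by simp
  qed
qed

lemma range_P: "x\<in>Q \<Longrightarrow> range (P x) = P x ` {..<k x}"
proof -
  assume x: "x\<in>Q"
  have "P x n \<in> P x ` {..<k x}" for n
    using P_mod[OF x, of n] k[OF x] by (metis image_eqI lessThan_iff mod_less_divisor)
  then show ?thesis by auto
qed
lemma card_range_P: "x\<in>Q \<Longrightarrow> card (range (P x)) = k x"
  using range_P P_inj card_image by fastforce
lemma range_P_sub: "x\<in>Q \<Longrightarrow> range (P x) \<subseteq> Q" using P_in by auto
lemma k_le9: "x\<in>Q \<Longrightarrow> k x \<le> 9"
  using card_mono[OF fin range_P_sub] card_range_P card9 by metis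

lemma G: "y\<in>Q \<Longrightarrow> m (m y y) (P y n) = P y (n+2)"
proof (induction n)
  case 0 then show ?case by (simp add: P_def numeral_2_eq_2 rid closed)
next
  case (Suc n)
  have "m (m y y) (P y (Suc n)) = m (m y y) (m (P y n) y)"
    using Suc.prems P_in comm by (simp add: PSuc)
  also have "\<dots> = m (m (m y y) (P y n)) y" using jordan Suc.prems P_in by blast
  also have "\<dots> = m y (P y (n+2))" using Suc comm P_in by simp
  finally show ?case by (simp add: PSuc)
qed

lemma H: "y\<in>Q \<Longrightarrow> P (m y y) n = P y (2*n)"
proof (induction n)
  case 0 then show ?case by simp
next
  case (Suc n)
  have "P (m y y) (Suc n) = m (m y y) (P y (2*n))" using Suc by (simp add: PSuc)
  also have "\<dots> = P y (2 * Suc n)" using G Suc.prems by simp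
  finally show ?case .
qed

lemma kdvd: "y\<in>Q \<Longrightarrow> k (m y y) dvd n \<longleftrightarrow> k y dvd 2*n"
  using P_e_iff H closed by metis


lemma sq_surj: assumes c: "c \<in> Q" shows "\<exists>a\<in>Q. m a a = c"
proof -
  define f where "f a = (THE b. b \<in> Q \<and> m a b = c)" for a
  have f1: "f a \<in> Q \<and> m a (f a) = c" if a: "a \<in> Q" for a
    unfolding f_def using theI'[OF uniq[OF a c]] by simp
  have f2: "f (f a) = a" if a: "a \<in> Q" for a
  proof -
    have fa: "f a \<in> Q" and mc: "m (f a) a = c" using f1[OF a] comm[OF a] by auto
    show ?thesis unfolding f_def[of "f a"]
    proof (rule the_equality)
      show "a \<in> Q \<and> m (f a) a = c" using a mc by simp
      fix b assume "b \<in> Q \<and> m (f a) b = c"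
      then show "b = a" using lcancel[OF fa, of b a] a mc by simp
    qed
  qed
  have "odd (card Q)" using card9 by simp
  then have "\<exists>a\<in>Q. f a = a" using invol_fix[rule_format, of Q "card Q" f] fin f1 f2 by simp
  then obtain a where aQ: "a \<in> Q" and fa: "f a = a" by blast
  have "m a a = c" using f1[OF aQ] fa by simp
  then show ?thesis using aQ by blast
qed

lemma sq_inj: "inj_on (\<lambda>a. m a a) Q"
proof -
  have "(\<lambda>a. m a a) ` Q = Q" using sq_surj closed by fastforce
  then show ?thesis using eq_card_imp_inj_on[OF fin, of "\<lambda>a. m a a"] by simp
qed

lemma sq_e: "x\<in>Q \<Longrightarrow> m x x = e \<Longrightarrow> x = e"
  using sq_inj e_in lid unfolding inj_on_def by metis
lemma sq_id: "x\<in>Q \<Longrightarrow> m x x = x \<Longrightarrow> x = e"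
  using lcancel rid e_in by metis

lemma k1: "x\<in>Q \<Longrightarrow> x \<noteq> e \<Longrightarrow> 1 < k x"
proof -
  assume x: "x\<in>Q" and xe: "x \<noteq> e"
  have "k x \<noteq> 1" using k[OF x] P1[OF x] xe by (rule_tac notI) simp
  then show ?thesis using k[OF x] by simp
qed

lemma arith1: "0 < (a::nat) \<Longrightarrow> a dvd b \<Longrightarrow> b dvd 2*a \<Longrightarrow> \<not> b dvd a \<Longrightarrow> b = 2*a"
proof -
  assume a: "0 < a" and ab: "a dvd b" and b2: "b dvd 2*a" and nb: "\<not> b dvd a"
  obtain t where t: "b = a*t" using ab by (rule dvdE)
  have "a * t dvd a * 2" using b2 t by (simp add: mult.commute)
  then have t2: "t dvd 2" using a by simp
  have "t \<noteq> 0" using t2 by (rule_tac notI) simp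
  moreover have "t \<le> 2" using t2 by (rule dvd_imp_le) simp
  moreover have "t \<noteq> 1" using t nb by (rule_tac notI) simp
  ultimately have "t = 2" by arith
  then show ?thesis using t by simp
qed

lemma k_odd: assumes x: "x\<in>Q" shows "odd (k x)"
proof (rule ccontr)
  assume ev: "\<not> odd (k x)"
  obtain w where w: "w \<in> Q" "m w w = x" using sq_surj x by blast
  define a where "a = k x"
  define b where "b = k w"
  have D: "a dvd n \<longleftrightarrow> b dvd 2*n" for n using kdvd[OF w(1)] w(2) a_def b_def by simp
  have a0: "0 < a" using k x a_def by simp
  have ab: "a dvd b" using D[of b] by simp
  have b2: "b dvd 2*a" using D[of a] by simp
  obtain c where c: "a = 2*c" using ev a_def by auto
  have "\<not> a dvd c" using c a0 nat_dvd_not_less[of c a] by simp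
  then have "\<not> b dvd a" using D[of c] c by simp
  then have "b = 2*a" using arith1 a0 ab b2 by blast
  moreover have "b \<le> 9" using k_le9 w b_def by simp
  ultimately have "a = 2 \<or> a = 4" using c a0 by arith
  moreover have xe: "x \<noteq> e"
  proof
    assume "x = e" then have "P x 1 = e" using P1 x by simp
    then have "k x dvd 1" using P_e_iff x by blast
    then show False using ev by simp
  qed
  moreover have "a \<noteq> 2"
  proof
    assume "a = 2" then have "P x 2 = e" using k[OF x] a_def by metis
    then show False using P2 x sq_e xe by simp
  qed
  moreover have "a \<noteq> 4"
  proof
    assume a4: "a = 4"
    have "k (m x x) dvd 2" using kdvd[OF x, of 2] a4 a_def by simp
    then have "P (m x x) 2 = e" using P_e_iff closed x by blast
    then have "m (m x x) (m x x) = e" using P2 closed x by simp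
    then show False using sq_e closed x xe by metis
  qed
  ultimately show False by blast
qed


lemma shift1: assumes x: "x\<in>Q" and d: "d\<in>Q" and md: "m x d \<in> range (P x)"
  shows "d \<in> range (P x)"
proof -
  obtain i where i: "m x d = P x i" using md by blast
  have k0: "0 < k x" using k[OF x] by simp
  have "P x i = P x (i + k x * 1)" using P_period[OF x] by metis
  also have "\<dots> = P x (Suc (i + k x - 1))" using k0 by simp
  also have "\<dots> = m x (P x (i + k x - 1))" by (simp add: PSuc)
  finally have "m x d = m x (P x (i + k x - 1))" using i by simp
  then have "d = P x (i + k x - 1)" using lcancel[OF x d P_in[OF x]] by blast
  then show ?thesis by blast
qed

lemma shift2: assumes x: "x\<in>Q" and xe: "x \<noteq> e" and d: "d\<in>Q" and md: "m (m x x) d \<in> range (P x)"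
  shows "d \<in> range (P x)"
proof -
  obtain i where i: "m (m x x) d = P x i" using md by blast
  have k0: "1 < k x" using k1[OF x xe] .
  have "P x i = P x (i + k x * 1)" using P_period[OF x] by metis
  also have "\<dots> = P x ((i + k x - 2) + 2)" using k0 by (simp del: add_2_eq_Suc add_2_eq_Suc')
  also have "\<dots> = m (m x x) (P x (i + k x - 2))" using G[OF x] by simp
  finally have "m (m x x) d = m (m x x) (P x (i + k x - 2))" using i by simp
  then have "d = P x (i + k x - 2)" using lcancel[OF closed[OF x x] d P_in[OF x]] by blast
  then show ?thesis by blast
qed

lemma gen_eq: assumes x: "x\<in>Q" and O: "range (P x) = Q" shows "gen_subloop Q m e x = Q"
proof
  have "subloop Q Q m e" unfolding subloop_def using L by simp
  then show "gen_subloop Q m e x \<subseteq> Q" unfolding gen_subloop_def using x by blast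
next
  have "P x n \<in> S" if S: "subloop S Q m e" "x \<in> S" for S n
  proof (induction n)
    case 0 then show ?case using S unfolding subloop_def loop_def by simp
  next
    case (Suc n) then show ?case using S unfolding subloop_def loop_def by (simp add: PSuc)
  qed
  then show "Q \<subseteq> gen_subloop Q m e x" unfolding gen_subloop_def using O by blast
qed

lemma main: assumes x: "x\<in>Q" and cx: "cube m x \<noteq> e" shows "gen_subloop Q m e x = Q"
proof -
  have xe: "x \<noteq> e"
  proof
    assume "x = e" then show False using cx e_in by (simp add: cube_def lid)
  qed
  have od: "odd (k x)" by (rule k_odd[OF x])
  have le: "k x \<le> 9" by (rule k_le9[OF x])
  have n1: "1 < k x" by (rule k1[OF x xe])
  have n3: "k x \<noteq> 3"
  proof
    assume "k x = 3" then have "P x 3 = e" using k[OF x] by metis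
    then show False using P3[OF x] cx by simp
  qed
  obtain r where r: "k x = 2*r+1" using od by (rule oddE)
  have cases: "k x = 5 \<or> k x = 7 \<or> k x = 9" using r le n1 n3 by arith
  define Orb where "Orb = range (P x)"
  have OQ: "Orb \<subseteq> Q" unfolding Orb_def using range_P_sub[OF x] .
  have cO: "card Orb = k x" unfolding Orb_def using card_range_P[OF x] .
  have fO: "finite Orb" using OQ fin finite_subset by blast
  have cD: "card (Q - Orb) = 9 - k x" using card_Diff_subset[OF fO OQ] cO card9 by simp
  have nx: "m x d \<in> Q - Orb" if "d \<in> Q - Orb" for d
    using shift1[OF x, of d] closed[OF x, of d] that unfolding Orb_def by blast
  have nxx: "m (m x x) d \<in> Q - Orb" if "d \<in> Q - Orb" for d
    using shift2[OF x xe, of d] closed[OF closed[OF x x], of d] that unfolding Orb_def by blast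
  have xx_e: "m x x \<noteq> e" using sq_e[OF x] xe by blast
  have xx_x: "m x x \<noteq> x" using sq_id[OF x] xe by blast
  consider "k x = 5" | "k x = 7" | "k x = 9" using cases by blast
  then show ?thesis
  proof cases
    case 3
    have "Orb = Q" using card_subset_eq[OF fin OQ] cO card9 3 by simp
    then show ?thesis using gen_eq[OF x] Orb_def by simp
  next
    case 2
    then have "card (Q - Orb) = 2" using cD by simp
    then obtain a b where ab: "Q - Orb = {a, b}" "a \<noteq> b" by (auto simp: card_2_iff)
    have aD: "a \<in> Q - Orb" using ab by blast
    have aQ: "a \<in> Q" using aD by blast
    have "m x a \<noteq> a"
    proof
      assume "m x a = a"
      then have "m a x = m a e" using comm[OF x aQ] rid[OF aQ] by simp
      then show False using lcancel[OF aQ x e_in] xe by blast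
    qed
    then have xa: "m x a = b" using nx[OF aD] ab by blast
    have "m (m x x) a \<noteq> a"
    proof
      assume "m (m x x) a = a"
      then have "m a (m x x) = m a e" using comm[OF closed[OF x x] aQ] rid[OF aQ] by simp
      then show False using lcancel[OF aQ closed[OF x x] e_in] xx_e by blast
    qed
    moreover have "m (m x x) a \<noteq> b"
    proof
      assume "m (m x x) a = b"
      then have "m a (m x x) = m a x" using comm[OF closed[OF x x] aQ] comm[OF x aQ] xa by simp
      then show False using lcancel[OF aQ closed[OF x x] x] xx_x by blast
    qed
    ultimately show ?thesis using nxx[OF aD] ab by blast
  next
    case 1
    \<comment> \<open>Orb is closed in the sense that left multiplication by an element of Orb maps Q - Orb into Q - Orb\<close>
    have x4: "P x 4 = m (m x x) (m x x)"
    proof -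
      have "P x 4 = P (m x x) 2" using H[OF x, of 2] by simp
      also have "\<dots> = m (m x x) (m x x)" using P2[OF closed[OF x x]] .
      finally show ?thesis .
    qed
    have y4: "P x 4 \<in> Q" using P_in[OF x] .
    have Py4: "P (P x 4) n = P x (4*n)" for n
      using x4 H[OF closed[OF x x], of n] H[OF x, of "2*n"] by simp
    have x3: "P x 3 = m (P x 4) (P x 4)"
    proof -
      have "P x 3 = P x (3 + k x * 1)" using P_period[OF x] by metis
      also have "\<dots> = P (P x 4) 2" using Py4[of 2] 1 by simp
      also have "\<dots> = m (P x 4) (P x 4)" using P2[OF y4] .
      finally show ?thesis .
    qed
    have per: "P x (a + 5 * c) = P x a" for a c using P_period[OF x, of a c] 1 by simp
    have stay: "d \<in> Orb" if uO: "u \<in> Orb" and dQ: "d \<in> Q" and od: "m u d \<in> Orb" for u d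
    proof -
      obtain i where ui: "u = P x i" using uO unfolding Orb_def by blast
      have "u = P x (i mod 5)" using ui P_mod[OF x, of i] 1 by simp
      moreover have "i mod 5 < 5" by simp
      ultimately obtain j where j: "j < 5" "u = P x j" by blast
      obtain t where t: "m u d = P x t" using od unfolding Orb_def by blast
      have "j = 0 \<or> j = 1 \<or> j = 2 \<or> j = 3 \<or> j = 4" using j by arith
      then show ?thesis
      proof (elim disjE)
        assume "j = 0" then show ?thesis using j od lid[OF dQ] by simp
      next
        assume "j = 1" then show ?thesis using j od shift1[OF x dQ] P1[OF x] unfolding Orb_def by simp
      next
        assume "j = 2" then show ?thesis using j od shift2[OF x xe dQ] P2[OF x] unfolding Orb_def by simp
      next
        assume j4: "j = 4"
        have "m (P x 4) (P x (6*t+6)) = m (m (m x x) (m x x)) (P (m x x) (3*t+3))"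
          using x4 H[OF x, of "3*t+3"] by simp
        also have "\<dots> = P (m x x) (3*t+3+2)" using G[OF closed[OF x x]] by simp
        also have "\<dots> = P x (t + 5 * (t+2))" using H[OF x, of "3*t+3+2"] by (simp add: algebra_simps)
        also have "\<dots> = P x t" using per .
        finally have "m (P x 4) (P x (6*t+6)) = m (P x 4) d" using t j j4 by simp
        then have "d = P x (6*t+6)" using lcancel[OF y4 P_in[OF x] dQ] by metis
        then show ?thesis unfolding Orb_def by blast
      next
        assume j3: "j = 3"
        have "m (P x 3) (P x (16*t+12)) = m (m (P x 4) (P x 4)) (P (P x 4) (4*t+3))"
          using x3 Py4[of "4*t+3"] by (simp add: algebra_simps)
        also have "\<dots> = P (P x 4) (4*t+3+2)" using G[OF y4] by simp
        also have "\<dots> = P x (t + 5 * (3*t+4))" using Py4[of "4*t+3+2"] by (simp add: algebra_simps)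
        also have "\<dots> = P x t" using per .
        finally have "m (P x 3) (P x (16*t+12)) = m (P x 3) d" using t j j3 by simp
        then have "d = P x (16*t+12)" using lcancel[OF P_in[OF x] P_in[OF x] dQ] by metis
        then show ?thesis unfolding Orb_def by blast
      qed
    qed
    have "card (Q - Orb) = 4" using cD 1 by simp
    then have "Q - Orb \<noteq> {}" by (rule_tac notI) simp
    then obtain d where dD: "d \<in> Q - Orb" by blast
    have "inj_on (\<lambda>u. m u d) Orb"
    proof
      fix u1 u2 assume "u1 \<in> Orb" "u2 \<in> Orb" "m u1 d = m u2 d"
      then show "u1 = u2" using rcancel[of d u1 u2] dD OQ by blast
    qed
    moreover have "(\<lambda>u. m u d) ` Orb \<subseteq> Q - Orb"
    proof
      fix z assume "z \<in> (\<lambda>u. m u d) ` Orb"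
      then obtain u where uO: "u \<in> Orb" and z: "z = m u d" by blast
      have dQ: "d \<in> Q" and dO: "d \<notin> Orb" using dD by auto
      have "z \<in> Q" using z closed uO OQ dQ by blast
      moreover have "z \<notin> Orb" using stay[OF uO dQ] dO z by blast
      ultimately show "z \<in> Q - Orb" by blast
    qed
    ultimately have "card Orb \<le> card (Q - Orb)" using card_inj_on_le fin by blast
    then show ?thesis using cO 1 \<open>card (Q - Orb) = 4\<close> by simp
  qed
qed

end

theorem lemma3p6:
  fixes Q :: "'a set" and m :: "'a \<Rightarrow> 'a \<Rightarrow> 'a" and e :: 'a
  assumes "jordan_loop Q m e" and "finite Q" and "card Q = 9"
  shows "(\<forall>x\<in>Q. cube m x = e) \<or> (\<exists>x\<in>Q. gen_subloop Q m e x = Q)"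
proof -
  interpret JL Q m e using assms by unfold_locales
  show ?thesis using main by blast
qed

end
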